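(* Let $K$ be a field, $A\subset K$ and $B\subset K$ finite sets with $|A|=m$, $|B|=n$. Let $0\le p\le m$, $0\le q\le n$, set $d:=p+q$ and assume $d\le\min\{m-1,n-1\}$. Then $$\operatorname{Syl}_{p,q}(A,B)=(-1)^{p(m-d)}\binom{d}{p}\operatorname{Syl}_{0,d}(A,B).$$
   Context: For finite sets $Y,Z$, $\mathcal{R}(Y,Z):=\prod_{y\in Y,z\in Z}(y-z)$ (equal to $1$ if $Y$ or $Z$ is empty), and $\mathcal{R}(x,Z):=\mathcal{R}(\{x\},Z)$. For $0\le p\le m$, $0\le q\le n$, $$\operatorname{Syl}_{p,q}(A,B)(x):=\sum_{\substack{A'\subset A,\ B'\subset B\\ |A'|=p,\ |B'|=q}}\mathcal{R}(A',B')\,\mathcal{R}(A\setminus A',B\setminus B')\,\frac{\mathcal{R}(x,A')\,\mathcal{R}(x,B')}{\mathcal{R}(A',A\setminus A')\,\mathcal{R}(B',B\setminus B')}.$$ *)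

theory Defs
  imports "HOL-Computational_Algebra.Polynomial"
begin

definition Res :: "'a::field set \<Rightarrow> 'a set \<Rightarrow> 'a" where
  "Res Y Z = (\<Prod>y\<in>Y. \<Prod>z\<in>Z. (y - z))"

definition ResX :: "'a::field set \<Rightarrow> 'a poly" where
  "ResX Z = (\<Prod>z\<in>Z. [:- z, 1:])"

definition Syl :: "nat \<Rightarrow> nat \<Rightarrow> 'a::field set \<Rightarrow> 'a set \<Rightarrow> 'a poly" where
  "Syl p q A B = (\<Sum>A'\<in>{A'. A' \<subseteq> A \<and> card A' = p}. \<Sum>B'\<in>{B'. B' \<subseteq> B \<and> card B' = q}.
     smult (Res A' B' * Res (A - A') (B - B') / (Res A' (A - A') * Res B' (B - B')))
           (ResX A' * ResX B'))"

end

theory Submission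
  imports Defs
begin

definition S0 :: "nat \<Rightarrow> nat \<Rightarrow> 'a::field set \<Rightarrow> 'a set \<Rightarrow> 'a" where
  "S0 p q A B = (\<Sum>A'\<in>{A'. A' \<subseteq> A \<and> card A' = p}. \<Sum>B'\<in>{B'. B' \<subseteq> B \<and> card B' = q}.
     Res A' B' * Res (A - A') (B - B') / (Res A' (A - A') * Res B' (B - B')))"

lemma poly_many_roots_zero:
  fixes F :: "'a::field poly"
  assumes "degree F \<le> d" "finite S" "card S > d" "\<forall>x\<in>S. poly F x = 0"
  shows "F = 0"
proof (rule ccontr)
  assume F: "F \<noteq> 0"
  have "card S \<le> card {x. poly F x = 0}"
    using assms(4) by (intro card_mono poly_roots_finite[OF F]) auto
  also have "\<dots> \<le> degree F" by (rule card_poly_roots_bound[OF F])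
  finally show False using assms by simp
qed

lemma poly_ResX: "poly (ResX Z) x = (\<Prod>z\<in>Z. x - z)"
  by (simp add: ResX_def poly_prod)

lemma ResX_nz: "ResX Z \<noteq> (0 :: 'a::field poly)"
  unfolding ResX_def by (cases "finite Z") auto

lemma degree_ResX: "finite Z \<Longrightarrow> degree (ResX Z :: 'a::field poly) = card Z"
  unfolding ResX_def by (subst degree_prod_sum_eq) auto

lemma lc_ResX: "lead_coeff (ResX Z :: 'a::field poly) = 1"
  unfolding ResX_def by (simp add: lead_coeff_prod)

lemma degree_ResX2: "finite X \<Longrightarrow> finite Y \<Longrightarrow>
   degree (ResX X * ResX Y :: 'a::field poly) = card X + card Y"
  by (simp add: degree_mult_eq ResX_nz degree_ResX)

lemma coeff_ResX2: "finite X \<Longrightarrow> finite Y \<Longrightarrow>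
   coeff (ResX X * ResX Y :: 'a::field poly) (card X + card Y) = 1"
  using degree_ResX2[of X Y] lead_coeff_mult[of "ResX X" "ResX Y"] lc_ResX[of X] lc_ResX[of Y]
  by simp

lemma Res_nz: "finite X \<Longrightarrow> finite Y \<Longrightarrow> X \<inter> Y = {} \<Longrightarrow> Res X Y \<noteq> (0::'a::field)"
  unfolding Res_def by (auto simp: prod_zero_iff)

lemma Res_insert_right: "finite Z \<Longrightarrow> b \<notin> Z \<Longrightarrow>
   Res Y (insert b Z) = Res Y Z * (\<Prod>y\<in>Y. y - b)"
  unfolding Res_def by (simp add: prod.distrib mult.commute)

lemma Res_insert_left: "finite Y \<Longrightarrow> a \<notin> Y \<Longrightarrow>
   Res (insert a Y) Z = (\<Prod>z\<in>Z. a - z) * Res Y Z"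
  unfolding Res_def by simp

lemma finite_subsets: "finite B \<Longrightarrow> finite {B'. B' \<subseteq> B \<and> card B' = q}"
  by (rule finite_subset[of _ "Pow B"]) auto

lemma degree_Syl: "finite A \<Longrightarrow> finite B \<Longrightarrow> degree (Syl p q A B) \<le> p + q"
  unfolding Syl_def
  apply (rule degree_sum_le, simp add: finite_subsets)
  apply (rule degree_sum_le, simp add: finite_subsets)
  apply (rule order.trans[OF degree_smult_le])
  apply clarify
  apply (subst degree_ResX2)
    apply (auto dest: finite_subset)
  done

lemma coeff_Syl: "finite A \<Longrightarrow> finite B \<Longrightarrow> coeff (Syl p q A B) (p + q) = S0 p q A B"
  unfolding Syl_def S0_def coeff_sum coeff_smult
  apply (rule sum.cong, simp)
  apply (rule sum.cong, simp)
  apply clarify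
  subgoal for A' B'
    using coeff_ResX2[of A' B'] by (auto dest: finite_subset)
  done

lemma term_B:
  fixes A B :: "'a::field set"
  assumes fin: "finite A" "finite B" and b: "b \<in> B" and sub: "A' \<subseteq> A" "B' \<subseteq> B - {b}"
    and c: "card A' = p" "card B' = q"
  shows "Res A' B' * Res (A-A') (B-B') / (Res A' (A-A') * Res B' (B-B')) * (poly (ResX A') b * poly (ResX B') b)
       = (-1)^(p+q) * (\<Prod>a\<in>A. a-b) * (Res A' B' * Res (A-A') (B-{b}-B') / (Res A' (A-A') * Res B' (B-{b}-B')))"
proof -
  have fA': "finite A'" "finite B'" using fin sub by (auto dest: finite_subset)
  have e1: "B - B' = insert b (B-{b}-B')" using b sub by auto
  have r1: "Res (A-A') (B-B') = Res (A-A') (B-{b}-B') * (\<Prod>y\<in>A-A'. y-b)"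
    unfolding e1 by (rule Res_insert_right) (use fin in auto)
  have r2: "Res B' (B-B') = Res B' (B-{b}-B') * (\<Prod>y\<in>B'. y-b)"
    unfolding e1 by (rule Res_insert_right) (use fin in auto)
  have p1: "poly (ResX A') b = (-1)^p * (\<Prod>a\<in>A'. a-b)"
    unfolding poly_ResX c(1)[symmetric] prod_uminus[symmetric] by simp
  have p2: "poly (ResX B') b = (-1)^q * (\<Prod>a\<in>B'. a-b)"
    unfolding poly_ResX c(2)[symmetric] prod_uminus[symmetric] by simp
  have pa: "(\<Prod>a\<in>A. a-b) = (\<Prod>a\<in>A-A'. a-b) * (\<Prod>a\<in>A'. a-b)"
    by (rule prod.subset_diff) (use sub fin in auto)
  have n1: "Res A' (A-A') \<noteq> 0" by (rule Res_nz) (use fA' fin in auto)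
  have n2: "Res B' (B-{b}-B') \<noteq> 0" by (rule Res_nz) (use fA' fin in auto)
  have n3: "(\<Prod>y\<in>B'. y-b) \<noteq> 0" using fA' sub by (auto simp: prod_zero_iff)
  show ?thesis unfolding r1 r2 p1 p2 pa power_add using n1 n2 n3
    by (simp add: field_simps)
qed

lemma term_A:
  fixes A B :: "'a::field set"
  assumes fin: "finite A" "finite B" and a: "a \<in> A" and sub: "A' \<subseteq> A - {a}" "B' \<subseteq> B"
    and c: "card A' = p" "card B' = q"
  shows "Res A' B' * Res (A-A') (B-B') / (Res A' (A-A') * Res B' (B-B')) * (poly (ResX A') a * poly (ResX B') a)
       = (-1)^p * (\<Prod>y\<in>B. a-y) * (Res A' B' * Res (A-{a}-A') (B-B') / (Res A' (A-{a}-A') * Res B' (B-B')))"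
proof -
  have fA': "finite A'" "finite B'" using fin sub by (auto dest: finite_subset)
  have e1: "A - A' = insert a (A-{a}-A')" using a sub by auto
  have r1: "Res (A-A') (B-B') = (\<Prod>z\<in>B-B'. a-z) * Res (A-{a}-A') (B-B')"
    unfolding e1 by (rule Res_insert_left) (use fin in auto)
  have r2: "Res A' (A-A') = Res A' (A-{a}-A') * (\<Prod>y\<in>A'. y-a)"
    unfolding e1 by (rule Res_insert_right) (use fin in auto)
  have p1: "poly (ResX A') a = (-1)^p * (\<Prod>y\<in>A'. y-a)"
    unfolding poly_ResX c(1)[symmetric] prod_uminus[symmetric] by simp
  have p2: "poly (ResX B') a = (\<Prod>z\<in>B'. a-z)"
    unfolding poly_ResX by simp
  have pb: "(\<Prod>z\<in>B. a-z) = (\<Prod>z\<in>B-B'. a-z) * (\<Prod>z\<in>B'. a-z)"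
    by (rule prod.subset_diff) (use sub fin in auto)
  have n1: "Res A' (A-{a}-A') \<noteq> 0" by (rule Res_nz) (use fA' fin in auto)
  have n2: "Res B' (B-B') \<noteq> 0" by (rule Res_nz) (use fA' fin in auto)
  have n3: "(\<Prod>y\<in>A'. y-a) \<noteq> 0" using fA' sub by (auto simp: prod_zero_iff)
  show ?thesis unfolding r1 r2 p1 p2 pb using n1 n2 n3
    by (simp add: field_simps)
qed

lemma Syl_eval_B:
  fixes A B :: "'a::field set"
  assumes fin: "finite A" "finite B" and b: "b \<in> B"
  shows "poly (Syl p q A B) b = (-1)^(p+q) * (\<Prod>a\<in>A. a-b) * S0 p q A (B-{b})"
proof -
  have "poly (Syl p q A B) b = (\<Sum>A'\<in>{A'. A' \<subseteq> A \<and> card A' = p}. \<Sum>B'\<in>{B'. B' \<subseteq> B \<and> card B' = q}.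
     Res A' B' * Res (A - A') (B - B') / (Res A' (A - A') * Res B' (B - B')) * (poly (ResX A') b * poly (ResX B') b))"
    by (simp add: Syl_def poly_sum)
  also have "\<dots> = (\<Sum>A'\<in>{A'. A' \<subseteq> A \<and> card A' = p}. \<Sum>B'\<in>{B'. B' \<subseteq> B - {b} \<and> card B' = q}.
     Res A' B' * Res (A - A') (B - B') / (Res A' (A - A') * Res B' (B - B')) * (poly (ResX A') b * poly (ResX B') b))"
  proof (rule sum.cong[OF refl], rule sum.mono_neutral_right)
    show "finite {B'. B' \<subseteq> B \<and> card B' = q}" using fin by (simp add: finite_subsets)
  next
    fix A' show "\<forall>B'\<in>{B'. B' \<subseteq> B \<and> card B' = q} - {B'. B' \<subseteq> B - {b} \<and> card B' = q}.
      Res A' B' * Res (A - A') (B - B') / (Res A' (A - A') * Res B' (B - B')) * (poly (ResX A') b * poly (ResX B') b) = 0"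
    proof
      fix B' assume "B' \<in> {B'. B' \<subseteq> B \<and> card B' = q} - {B'. B' \<subseteq> B - {b} \<and> card B' = q}"
      then have "b \<in> B'" "finite B'" using fin by (auto dest: finite_subset)
      then have "poly (ResX B') b = 0" by (auto simp: poly_ResX prod_zero_iff)
      then show "Res A' B' * Res (A - A') (B - B') / (Res A' (A - A') * Res B' (B - B')) * (poly (ResX A') b * poly (ResX B') b) = 0" by simp
    qed
  qed auto
  also have "\<dots> = (\<Sum>A'\<in>{A'. A' \<subseteq> A \<and> card A' = p}. \<Sum>B'\<in>{B'. B' \<subseteq> B - {b} \<and> card B' = q}.
     (-1)^(p+q) * (\<Prod>a\<in>A. a-b) * (Res A' B' * Res (A-A') (B-{b}-B') / (Res A' (A-A') * Res B' (B-{b}-B'))))"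
    by (intro sum.cong refl, rule term_B[OF fin b]) auto
  finally show ?thesis by (simp add: S0_def sum_distrib_left)
qed

lemma Syl_eval_A:
  fixes A B :: "'a::field set"
  assumes fin: "finite A" "finite B" and a: "a \<in> A"
  shows "poly (Syl p q A B) a = (-1)^p * (\<Prod>y\<in>B. a-y) * S0 p q (A-{a}) B"
proof -
  have "poly (Syl p q A B) a = (\<Sum>A'\<in>{A'. A' \<subseteq> A \<and> card A' = p}. \<Sum>B'\<in>{B'. B' \<subseteq> B \<and> card B' = q}.
     Res A' B' * Res (A - A') (B - B') / (Res A' (A - A') * Res B' (B - B')) * (poly (ResX A') a * poly (ResX B') a))"
    by (simp add: Syl_def poly_sum)
  also have "\<dots> = (\<Sum>A'\<in>{A'. A' \<subseteq> A - {a} \<and> card A' = p}. \<Sum>B'\<in>{B'. B' \<subseteq> B \<and> card B' = q}.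
     Res A' B' * Res (A - A') (B - B') / (Res A' (A - A') * Res B' (B - B')) * (poly (ResX A') a * poly (ResX B') a))"
  proof (rule sum.mono_neutral_right)
    show "finite {A'. A' \<subseteq> A \<and> card A' = p}" using fin by (simp add: finite_subsets)
  next
    show "\<forall>A'\<in>{A'. A' \<subseteq> A \<and> card A' = p} - {A'. A' \<subseteq> A - {a} \<and> card A' = p}. (\<Sum>B'\<in>{B'. B' \<subseteq> B \<and> card B' = q}.
      Res A' B' * Res (A - A') (B - B') / (Res A' (A - A') * Res B' (B - B')) * (poly (ResX A') a * poly (ResX B') a)) = 0"
    proof
      fix A' assume "A' \<in> {A'. A' \<subseteq> A \<and> card A' = p} - {A'. A' \<subseteq> A - {a} \<and> card A' = p}"
      then have "a \<in> A'" "finite A'" using fin by (auto dest: finite_subset)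
      then have "poly (ResX A') a = 0" by (auto simp: poly_ResX prod_zero_iff)
      then show "(\<Sum>B'\<in>{B'. B' \<subseteq> B \<and> card B' = q}. Res A' B' * Res (A - A') (B - B') / (Res A' (A - A') * Res B' (B - B')) * (poly (ResX A') a * poly (ResX B') a)) = 0" by simp
    qed
  qed auto
  also have "\<dots> = (\<Sum>A'\<in>{A'. A' \<subseteq> A - {a} \<and> card A' = p}. \<Sum>B'\<in>{B'. B' \<subseteq> B \<and> card B' = q}.
     (-1)^p * (\<Prod>y\<in>B. a-y) * (Res A' B' * Res (A-{a}-A') (B-B') / (Res A' (A-{a}-A') * Res B' (B-B'))))"
    by (intro sum.cong refl, rule term_A[OF fin a]) auto
  finally show ?thesis by (simp add: S0_def sum_distrib_left)
qed

lemma Res_empty_right[simp]: "Res Y {} = 1" by (simp add: Res_def)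
lemma Res_empty_left[simp]: "Res {} Z = 1" by (simp add: Res_def)

lemma subsets_card0: "finite B \<Longrightarrow> {B'. B' \<subseteq> B \<and> card B' = 0} = {{}}"
  by (auto dest: finite_subset)

lemma sum_insert_reindex:
  fixes g :: "'b set \<Rightarrow> 'a::comm_monoid_add"
  assumes fin: "finite B" and b: "b \<in> B"
    and z: "\<And>B'. B' \<subseteq> B \<Longrightarrow> b \<notin> B' \<Longrightarrow> g B' = 0"
  shows "(\<Sum>B'\<in>{B'. B' \<subseteq> B \<and> card B' = Suc q}. g B') = (\<Sum>B1\<in>{B1. B1 \<subseteq> B - {b} \<and> card B1 = q}. g (insert b B1))"
proof -
  let ?T = "insert b ` {B1. B1 \<subseteq> B - {b} \<and> card B1 = q}"
  have "(\<Sum>B'\<in>{B'. B' \<subseteq> B \<and> card B' = Suc q}. g B') = (\<Sum>B'\<in>?T. g B')"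
  proof (rule sum.mono_neutral_right)
    show "finite {B'. B' \<subseteq> B \<and> card B' = Suc q}" using fin by (simp add: finite_subsets)
    show "?T \<subseteq> {B'. B' \<subseteq> B \<and> card B' = Suc q}"
    proof
      fix X assume "X \<in> ?T"
      then obtain B1 where X: "X = insert b B1" "B1 \<subseteq> B - {b}" "card B1 = q" by auto
      then have "finite B1" using fin by (auto dest: finite_subset)
      moreover have "b \<notin> B1" using X by auto
      ultimately show "X \<in> {B'. B' \<subseteq> B \<and> card B' = Suc q}" using X b by auto
    qed
    show "\<forall>i\<in>{B'. B' \<subseteq> B \<and> card B' = Suc q} - ?T. g i = 0"
    proof
      fix B' assume B': "B' \<in> {B'. B' \<subseteq> B \<and> card B' = Suc q} - ?T"
      have "b \<notin> B'"
      proof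
        assume bB: "b \<in> B'"
        have fB': "finite B'" using B' fin by (auto dest: finite_subset)
        have "B' = insert b (B' - {b})" using bB by auto
        moreover have "B' - {b} \<in> {B1. B1 \<subseteq> B - {b} \<and> card B1 = q}"
          using B' bB fB' by auto
        ultimately show False using B' by blast
      qed
      then show "g B' = 0" using B' z by auto
    qed
  qed
  also have "\<dots> = (\<Sum>B1\<in>{B1. B1 \<subseteq> B - {b} \<and> card B1 = q}. g (insert b B1))"
    by (rule sum.reindex_cong[where l="insert b"]) (auto simp: inj_on_def)
  finally show ?thesis .
qed

lemma L1:
  fixes B :: "'a::field set"
  assumes "finite B" "card B = p + q" "finite A1" "card A1 = p" "finite A2" "card A2 = q"
  shows "(\<Sum>B'\<in>{B'. B' \<subseteq> B \<and> card B' = q}. Res A1 B' * Res A2 (B - B') / Res B' (B - B')) = Res A1 A2"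
  using assms
proof (induction q arbitrary: A2 B)
  case 0
  then show ?case by (simp add: subsets_card0)
next
  case (Suc q)
  from Suc.prems obtain c A0 where A2: "A2 = insert c A0" "c \<notin> A0" "card A0 = q" "finite A0"
    by (metis card_Suc_eq finite_insert)
  define L where "L = (\<Sum>B'\<in>{B'. B' \<subseteq> B \<and> card B' = Suc q}.
      smult (Res A1 B' * Res A0 (B - B') / Res B' (B - B')) (ResX (B - B')))"
  define Rp where "Rp = smult (Res A1 A0) (\<Prod>a\<in>A1. [:a, -1:])"
  have polyRp: "poly Rp x = Res A1 A0 * (\<Prod>a\<in>A1. a - x)" for x
    by (simp add: Rp_def poly_prod)
  have degL: "degree L \<le> p"
    unfolding L_def
  proof (rule degree_sum_le)
    show "finite {B'. B' \<subseteq> B \<and> card B' = Suc q}" using Suc.prems by (simp add: finite_subsets)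
  next
    fix B' assume "B' \<in> {B'. B' \<subseteq> B \<and> card B' = Suc q}"
    moreover have "finite B'" using calculation Suc.prems(1) by (auto dest: finite_subset)
    ultimately have "card (B - B') = p" using Suc.prems by (simp add: card_Diff_subset)
    then show "degree (smult (Res A1 B' * Res A0 (B - B') / Res B' (B - B')) (ResX (B - B'))) \<le> p"
      using Suc.prems by (intro order.trans[OF degree_smult_le]) (simp add: degree_ResX)
  qed
  have degRp: "degree Rp \<le> p"
    unfolding Rp_def
  proof (rule order.trans[OF degree_smult_le])
    have "degree (\<Prod>a\<in>A1. [:a, -1:]) \<le> (\<Sum>a\<in>A1. degree [:a, -1::'a:])"
      using degree_prod_sum_le[OF Suc.prems(3), of "\<lambda>a. [:a, -1:]"] by (simp add: o_def)
    also have "\<dots> = p" using Suc.prems by simp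
    finally show "degree (\<Prod>a\<in>A1. [:a, -1:]) \<le> p" .
  qed
  have eqB: "poly (L - Rp) b = 0" if b: "b \<in> B" for b
  proof -
    have "poly L b = (\<Sum>B'\<in>{B'. B' \<subseteq> B \<and> card B' = Suc q}.
        Res A1 B' * Res A0 (B - B') / Res B' (B - B') * (\<Prod>z\<in>B - B'. b - z))"
      by (simp add: L_def poly_sum poly_ResX)
    also have "\<dots> = (\<Sum>B1\<in>{B1. B1 \<subseteq> B - {b} \<and> card B1 = q}.
        Res A1 (insert b B1) * Res A0 (B - insert b B1) / Res (insert b B1) (B - insert b B1) * (\<Prod>z\<in>B - insert b B1. b - z))"
    proof (rule sum_insert_reindex[OF Suc.prems(1) b])
      fix B' assume "B' \<subseteq> B" "b \<notin> B'"
      then have "b \<in> B - B'" using b by auto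
      then have "(\<Prod>z\<in>B - B'. b - z) = 0" using Suc.prems by (auto simp: prod_zero_iff)
      then show "Res A1 B' * Res A0 (B - B') / Res B' (B - B') * (\<Prod>z\<in>B - B'. b - z) = 0" by simp
    qed
    also have "\<dots> = (\<Sum>B1\<in>{B1. B1 \<subseteq> B - {b} \<and> card B1 = q}.
        (\<Prod>a\<in>A1. a - b) * (Res A1 B1 * Res A0 (B - {b} - B1) / Res B1 (B - {b} - B1)))"
    proof (rule sum.cong[OF refl])
      fix B1 assume "B1 \<in> {B1. B1 \<subseteq> B - {b} \<and> card B1 = q}"
      then have B1: "B1 \<subseteq> B - {b}" "finite B1" "b \<notin> B1" using Suc.prems by (auto dest: finite_subset)
      have e: "B - insert b B1 = B - {b} - B1" by auto
      have r1: "Res A1 (insert b B1) = Res A1 B1 * (\<Prod>a\<in>A1. a - b)"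
        by (rule Res_insert_right) (use B1 in auto)
      have r2: "Res (insert b B1) (B - insert b B1) = (\<Prod>z\<in>B - insert b B1. b - z) * Res B1 (B - insert b B1)"
        by (rule Res_insert_left) (use B1 in auto)
      have n1: "(\<Prod>z\<in>B - insert b B1. b - z) \<noteq> 0" using Suc.prems by (auto simp: prod_zero_iff)
      have n2: "Res B1 (B - insert b B1) \<noteq> 0" by (rule Res_nz) (use B1 Suc.prems in auto)
      show "Res A1 (insert b B1) * Res A0 (B - insert b B1) / Res (insert b B1) (B - insert b B1) * (\<Prod>z\<in>B - insert b B1. b - z)
         = (\<Prod>a\<in>A1. a - b) * (Res A1 B1 * Res A0 (B - {b} - B1) / Res B1 (B - {b} - B1))"
        unfolding r1 r2 using n1 n2 unfolding e by (simp add: field_simps)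
    qed
    also have "\<dots> = (\<Prod>a\<in>A1. a - b) * (\<Sum>B1\<in>{B1. B1 \<subseteq> B - {b} \<and> card B1 = q}.
        Res A1 B1 * Res A0 (B - {b} - B1) / Res B1 (B - {b} - B1))"
      by (rule sum_distrib_left[symmetric])
    also have "\<dots> = (\<Prod>a\<in>A1. a - b) * Res A1 A0"
      using Suc.IH[of "B - {b}" A0] Suc.prems A2 b by simp
    finally show ?thesis by (simp add: polyRp)
  qed
  have "L - Rp = 0"
  proof (rule poly_many_roots_zero[of _ p B])
    show "degree (L - Rp) \<le> p" using degL degRp by (rule degree_diff_le)
  qed (use Suc.prems eqB in auto)
  then have "poly L c = poly Rp c" by (metis eq_iff_diff_eq_0)
  moreover have "poly L c = (\<Sum>B'\<in>{B'. B' \<subseteq> B \<and> card B' = Suc q}. Res A1 B' * Res A2 (B - B') / Res B' (B - B'))"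
    unfolding L_def poly_sum
  proof (rule sum.cong[OF refl])
    fix B' assume "B' \<in> {B'. B' \<subseteq> B \<and> card B' = Suc q}"
    have "Res A2 (B - B') = (\<Prod>z\<in>B - B'. c - z) * Res A0 (B - B')"
      unfolding A2 by (rule Res_insert_left) (use A2 in auto)
    then show "poly (smult (Res A1 B' * Res A0 (B - B') / Res B' (B - B')) (ResX (B - B'))) c =
          Res A1 B' * Res A2 (B - B') / Res B' (B - B')" by (simp add: poly_ResX)
  qed
  moreover have "poly Rp c = Res A1 A2"
    unfolding polyRp A2 by (subst Res_insert_right) (use A2 in auto)
  ultimately show ?case by simp
qed

lemma coeff_ResX_card: "finite B \<Longrightarrow> coeff (ResX B :: 'a::field poly) (card B) = 1"
  using lc_ResX[of B] degree_ResX[of B] by simp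

lemma BL_base:
  fixes A B :: "'a::field set"
  assumes "finite A" "finite B" "card B = p + q" "card A = p + q"
  shows "S0 p q A B = of_nat ((p + q) choose p)"
proof -
  have "S0 p q A B = (\<Sum>A'\<in>{A'. A' \<subseteq> A \<and> card A' = p}. 1 / Res A' (A - A') *
      (\<Sum>B'\<in>{B'. B' \<subseteq> B \<and> card B' = q}. Res A' B' * Res (A - A') (B - B') / Res B' (B - B')))"
    unfolding S0_def sum_distrib_left by (intro sum.cong refl) (simp add: field_simps)
  also have "\<dots> = (\<Sum>A'\<in>{A'. A' \<subseteq> A \<and> card A' = p}. 1)"
  proof (rule sum.cong[OF refl])
    fix A' assume "A' \<in> {A'. A' \<subseteq> A \<and> card A' = p}"
    then have A': "A' \<subseteq> A" "card A' = p" "finite A'" using assms by (auto dest: finite_subset)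
    have "card (A - A') = q" using A' assms by (simp add: card_Diff_subset)
    then have "(\<Sum>B'\<in>{B'. B' \<subseteq> B \<and> card B' = q}. Res A' B' * Res (A - A') (B - B') / Res B' (B - B')) = Res A' (A - A')"
      using assms A' by (intro L1) auto
    moreover have "Res A' (A - A') \<noteq> 0" by (rule Res_nz) (use A' assms in auto)
    ultimately show "1 / Res A' (A - A') *
      (\<Sum>B'\<in>{B'. B' \<subseteq> B \<and> card B' = q}. Res A' B' * Res (A - A') (B - B') / Res B' (B - B')) = 1" by simp
  qed
  also have "\<dots> = of_nat ((p + q) choose p)"
    using n_subsets[OF assms(1), of p] assms by simp
  finally show ?thesis .
qed

lemma BL_ind:
  fixes B :: "'a::field set"
  assumes fB: "finite B" and cB: "card B = p + q"
  shows "\<forall>A::'a set. finite A \<longrightarrow> card A = p + q + k \<longrightarrow>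
           S0 p q A B = (-1)^(p*k) * of_nat ((p + q) choose p)"
proof (induction k)
  case 0
  then show ?case using BL_base fB cB by auto
next
  case (Suc k)
  show ?case
  proof (intro allI impI)
    fix A :: "'a set" assume fA: "finite A" and cA: "card A = p + q + Suc k"
    define c where "c = (-1)^p * ((-1)^(p*k) * of_nat ((p + q) choose p) :: 'a)"
    define F where "F = Syl p q A B - smult c (ResX B)"
    have "F = 0"
    proof (rule poly_many_roots_zero[of F "p+q" A])
      show "degree F \<le> p + q" unfolding F_def
        using degree_Syl[OF fA fB, of p q] degree_ResX[OF fB] cB
        by (intro degree_diff_le) (auto intro: order.trans[OF degree_smult_le])
      show "\<forall>x\<in>A. poly F x = 0"
      proof
        fix a assume a: "a \<in> A"
        have "S0 p q (A - {a}) B = (-1)^(p*k) * of_nat ((p + q) choose p)"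
          using Suc.IH fA cA a by simp
        then show "poly F a = 0" unfolding F_def c_def
          by (simp add: Syl_eval_A[OF fA fB a] poly_ResX)
      qed
    qed (use fA cA in auto)
    then have "coeff (Syl p q A B) (p+q) = coeff (smult c (ResX B)) (p+q)"
      unfolding F_def by simp
    then have "S0 p q A B = c"
      using coeff_Syl[OF fA fB] coeff_ResX_card[OF fB] cB by simp
    then show "S0 p q A B = (-1)^(p*Suc k) * of_nat ((p + q) choose p)"
      unfolding c_def by (simp add: power_add)
  qed
qed

lemma BL:
  fixes A B :: "'a::field set"
  assumes "finite A" "finite B" "card B = p + q" "card A \<ge> p + q"
  shows "S0 p q A B = (-1)^(p*(card A - (p+q))) * of_nat ((p + q) choose p)"
  using BL_ind[OF assms(2,3), of "card A - (p+q)"] assms by auto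

lemma P_from_C:
  fixes A B :: "'a::field set"
  assumes fA: "finite A" and fB: "finite B" and cB: "card B > p + q"
    and C: "\<forall>b\<in>B. S0 p q A (B - {b}) = K * S0 0 (p+q) A (B - {b})"
  shows "Syl p q A B = smult K (Syl 0 (p+q) A B)"
proof -
  define F where "F = Syl p q A B - smult K (Syl 0 (p+q) A B)"
  have "F = 0"
  proof (rule poly_many_roots_zero[of F "p+q" B])
    show "degree F \<le> p + q" unfolding F_def
      using degree_Syl[OF fA fB, of p q] degree_Syl[OF fA fB, of 0 "p+q"]
      by (intro degree_diff_le) (auto intro: order.trans[OF degree_smult_le])
    show "\<forall>x\<in>B. poly F x = 0"
    proof
      fix b assume b: "b \<in> B"
      show "poly F b = 0" unfolding F_def
        using C b by (simp add: Syl_eval_B[OF fA fB b])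
    qed
  qed (use fB cB in auto)
  then show ?thesis unfolding F_def by simp
qed

lemma CP_ind:
  fixes A :: "'a::field set"
  assumes fA: "finite A" and cA: "card A \<ge> p + q + 1"
  shows "\<forall>B::'a set. finite B \<longrightarrow> card B = p + q + k \<longrightarrow>
     S0 p q A B = (-1)^(p*(card A - (p+q))) * of_nat ((p + q) choose p) * S0 0 (p+q) A B"
proof (induction k)
  case 0
  show ?case
  proof (intro allI impI)
    fix B :: "'a set" assume fB: "finite B" and cB: "card B = p + q + 0"
    have "S0 p q A B = (-1)^(p*(card A - (p+q))) * of_nat ((p + q) choose p)"
      using BL[OF fA fB] cB cA by simp
    moreover have "S0 0 (p+q) A B = 1"
      using BL[OF fA fB, of 0 "p+q"] cB cA by simp
    ultimately show "S0 p q A B = (-1)^(p*(card A - (p+q))) * of_nat ((p + q) choose p) * S0 0 (p+q) A B"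
      by simp
  qed
next
  case (Suc k)
  show ?case
  proof (intro allI impI)
    fix B :: "'a set" assume fB: "finite B" and cB: "card B = p + q + Suc k"
    have "Syl p q A B = smult ((-1)^(p*(card A - (p+q))) * of_nat ((p + q) choose p)) (Syl 0 (p+q) A B)"
      by (rule P_from_C[OF fA fB]) (use Suc.IH fB cB in auto)
    then have "coeff (Syl p q A B) (p+q) = coeff (smult ((-1)^(p*(card A - (p+q))) * of_nat ((p + q) choose p)) (Syl 0 (p+q) A B)) (0 + (p+q))"
      by simp
    then show "S0 p q A B = (-1)^(p*(card A - (p+q))) * of_nat ((p + q) choose p) * S0 0 (p+q) A B"
      unfolding coeff_smult coeff_Syl[OF fA fB] .
  qed
qed

theorem proposition3p3:
  fixes A B :: "'a::field set" and m n p q d :: nat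
  assumes "finite A" and "finite B" and "card A = m" and "card B = n"
    and "p \<le> m" and "q \<le> n" and "d = p + q"
    and "int d \<le> min (int m - 1) (int n - 1)"
  shows "Syl p q A B = smult ((-1) ^ (p * (m - d)) * of_nat (d choose p)) (Syl 0 d A B)"
proof -
  have m: "m \<ge> p + q + 1" and n: "n \<ge> p + q + 1" using assms(7,8) by auto
  have "Syl p q A B = smult ((-1)^(p*(card A - (p+q))) * of_nat ((p + q) choose p)) (Syl 0 (p+q) A B)"
  proof (rule P_from_C[OF assms(1,2)])
    show "card B > p + q" using n assms(4) by simp
    show "\<forall>b\<in>B. S0 p q A (B - {b}) = (-1)^(p*(card A - (p+q))) * of_nat ((p + q) choose p) * S0 0 (p+q) A (B - {b})"
    proof
      fix b assume b: "b \<in> B"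
      have "card (B - {b}) = p + q + (n - 1 - (p + q))" using b assms(2,4) n by simp
      then show "S0 p q A (B - {b}) = (-1)^(p*(card A - (p+q))) * of_nat ((p + q) choose p) * S0 0 (p+q) A (B - {b})"
        using CP_ind[OF assms(1), of p q "n - 1 - (p + q)"] m assms(2,3) by simp
    qed
  qed
  then show ?thesis using assms(3,7) by simp
qed

end
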